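(* Let $\Gamma=\{f_1,\dots,f_n\}$ be a family of weak weight-functions and suppose there is a nonzero direction $\mathbf{r}\in[0,1]^n$ such that each $f_i$ has a directional derivative in direction $\mathbf{r}$ at every point and $\frac{\partial f_i}{\partial\mathbf{r}}(\mathbf{x})\ge 0$ for every $i$ and every $\mathbf{x}\in[0,1]^n$. Then $\mathsf{BGM}_\Gamma$ is an $\mathbf{r}$-increasing pre-aggregation function.
   Context: A family of weak weight-functions (wFWF) is a family $\Gamma=\{f_i:[0,1]^n\to[0,1]\mid 1\le i\le n\}$ such that (I) $\sum_{i=1}^n f_i(\mathbf{x})\le 1$ for all $\mathbf{x}\in[0,1]^n$ and (II) $\sum_{i=1}^n f_i(1,\dots,1)=1$. The bounded generalized mixture function is $\mathsf{BGM}_\Gamma(\mathbf{x})=\sum_{i=1}^n f_i(\mathbf{x})\,x_i$. For a nonzero $\mathbf{r}\in\mathbb{R}^n$, $F:[0,1]^n\to[0,1]$ is $\mathbf{r}$-increasing if $F(\mathbf{x})\le F(x_1+tr_1,\dots,x_n+tr_n)$ for all $\mathbf{x}\in[0,1]^n$ and $t>0$ with $(x_1+tr_1,\dots,x_n+tr_n)\in[0,1]^n$. $F$ is a pre-aggregation function if $F(0,\dots,0)=0$, $F(1,\dots,1)=1$ and $F$ is $\mathbf{r}$-increasing for some nonzero $\mathbf{r}\in[0,1]^n$. *)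

theory Defs
  imports "HOL-Analysis.Analysis"
begin

definition unit_cube :: "(real ^ 'n) set" where
  "unit_cube = {x. \<forall>i. 0 \<le> x $ i \<and> x $ i \<le> 1}"

definition wFWF :: "('n::finite \<Rightarrow> real ^ 'n \<Rightarrow> real) \<Rightarrow> bool" where
  "wFWF f \<longleftrightarrow>
     (\<forall>i. \<forall>x\<in>unit_cube. 0 \<le> f i x \<and> f i x \<le> 1) \<and>
     (\<forall>x\<in>unit_cube. (\<Sum>i\<in>UNIV. f i x) \<le> 1) \<and>
     (\<Sum>i\<in>UNIV. f i (\<chi> j. 1)) = 1"

definition BGM :: "('n::finite \<Rightarrow> real ^ 'n \<Rightarrow> real) \<Rightarrow> real ^ 'n \<Rightarrow> real" where
  "BGM f x = (\<Sum>i\<in>UNIV. f i x * x $ i)"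

definition r_increasing :: "real ^ 'n \<Rightarrow> (real ^ 'n \<Rightarrow> real) \<Rightarrow> bool" where
  "r_increasing r F \<longleftrightarrow>
     (\<forall>x\<in>unit_cube. \<forall>t>0. x + t *\<^sub>R r \<in> unit_cube \<longrightarrow> F x \<le> F (x + t *\<^sub>R r))"

definition pre_aggregation :: "(real ^ 'n \<Rightarrow> real) \<Rightarrow> bool" where
  "pre_aggregation F \<longleftrightarrow>
     (\<forall>x\<in>unit_cube. 0 \<le> F x \<and> F x \<le> 1) \<and>
     F (\<chi> j. 0) = 0 \<and> F (\<chi> j. 1) = 1 \<and>
     (\<exists>r\<in>unit_cube. r \<noteq> 0 \<and> r_increasing r F)"

text \<open>Directional derivative of g at x in direction r, taken relative to the
  domain [0,1]^n (one-sided at the boundary).\<close>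
definition has_dir_deriv :: "(real ^ 'n \<Rightarrow> real) \<Rightarrow> real ^ 'n \<Rightarrow> real ^ 'n \<Rightarrow> real \<Rightarrow> bool" where
  "has_dir_deriv g r x D \<longleftrightarrow>
     ((\<lambda>t. g (x + t *\<^sub>R r)) has_real_derivative D) (at 0 within {t. x + t *\<^sub>R r \<in> unit_cube})"

end

theory Submission
  imports Defs
begin

lemma seg_in_cube:
  assumes "x \<in> unit_cube" "r \<in> unit_cube" "x + t *\<^sub>R r \<in> unit_cube" "0 \<le> s" "s \<le> t"
  shows "x + s *\<^sub>R r \<in> unit_cube"
proof -
  have "0 \<le> x $ j + s * r $ j \<and> x $ j + s * r $ j \<le> 1" for j
  proof -
    have a: "0 \<le> x $ j" "0 \<le> r $ j" "x $ j + t * r $ j \<le> 1"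
      using assms(1,2,3) unfolding unit_cube_def by auto
    have "s * r $ j \<le> t * r $ j" using a assms(5) by (simp add: mult_right_mono)
    then show ?thesis using a assms(4) by auto
  qed
  then show ?thesis unfolding unit_cube_def by simp
qed

lemma mono_dir:
  fixes h :: "real ^ 'n \<Rightarrow> real"
  assumes x: "x \<in> unit_cube" and r: "r \<in> unit_cube" and xt: "x + t *\<^sub>R r \<in> unit_cube"
    and t: "t > 0"
    and d: "\<forall>y\<in>unit_cube. \<exists>D. has_dir_deriv h r y D \<and> D \<ge> 0"
  shows "h x \<le> h (x + t *\<^sub>R r)"
proof -
  define g where "g = (\<lambda>u. h (x + u *\<^sub>R r))"
  have der: "\<exists>D. (g has_derivative (\<lambda>v. D * v)) (at s within {0..t}) \<and> D \<ge> 0"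
    if s: "0 \<le> s" "s \<le> t" for s
  proof -
    have ins: "x + s *\<^sub>R r \<in> unit_cube" using seg_in_cube[OF x r xt s] .
    then obtain D where D: "has_dir_deriv h r (x + s *\<^sub>R r) D" "D \<ge> 0" using d by blast
    let ?S = "{v. x + s *\<^sub>R r + v *\<^sub>R r \<in> unit_cube}"
    let ?k = "\<lambda>v. h (x + s *\<^sub>R r + v *\<^sub>R r)"
    have hk: "(?k has_derivative (\<lambda>v. D * v)) (at 0 within ?S)"
      using D(1) unfolding has_dir_deriv_def has_field_derivative_def by simp
    have img: "(\<lambda>u. u - s) ` {0..t} \<subseteq> ?S"
    proof
      fix v assume v: "v \<in> (\<lambda>u. u - s) ` {0..t}"
      obtain u where u: "u \<in> {0..t}" "v = u - s" using v by (rule imageE) auto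
      have "x + s *\<^sub>R r + v *\<^sub>R r = x + u *\<^sub>R r" using u(2) by (simp add: algebra_simps flip: scaleR_add_left)
      moreover have "x + u *\<^sub>R r \<in> unit_cube" using seg_in_cube[OF x r xt] u(1) by auto
      ultimately show "v \<in> ?S" by (simp add: add.assoc)
    qed
    have hk2: "(?k has_derivative (\<lambda>v. D * v)) (at ((\<lambda>u. u - s) s) within (\<lambda>u. u - s) ` {0..t})"
      using has_derivative_subset[OF hk img] by simp
    have lin: "((\<lambda>u. u - s) has_derivative (\<lambda>v. v)) (at s within {0..t})"
      by (auto intro!: derivative_eq_intros)
    have "((?k \<circ> (\<lambda>u. u - s)) has_derivative ((\<lambda>v. D * v) \<circ> (\<lambda>v. v))) (at s within {0..t})"
      by (rule diff_chain_within[OF lin hk2])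
    moreover have "?k \<circ> (\<lambda>u. u - s) = g"
      unfolding g_def by (rule ext) (simp add: algebra_simps flip: scaleR_add_left)
    ultimately show ?thesis using D(2) by (auto simp: o_def)
  qed
  then obtain Df where Df: "\<And>s. 0 \<le> s \<Longrightarrow> s \<le> t \<Longrightarrow>
      (g has_derivative (\<lambda>v. Df s * v)) (at s within {0..t}) \<and> Df s \<ge> 0"
    by metis
  obtain c where c: "c \<in> {0<..<t}" "g t - g 0 = (t - 0) * Df c"
    using mvt_simple[OF t, of g "\<lambda>s v. Df s * v"] Df by auto
  have "Df c \<ge> 0" using Df c(1) by auto
  then have "g t - g 0 \<ge> 0" using c(2) t by simp
  then show ?thesis unfolding g_def by simp
qed

theorem corollary3:
  fixes f :: "'n::finite \<Rightarrow> real ^ 'n \<Rightarrow> real" and r :: "real ^ 'n"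
  assumes "wFWF f"
    and "r \<in> unit_cube" and "r \<noteq> 0"
    and "\<forall>i. \<forall>x\<in>unit_cube. \<exists>D. has_dir_deriv (f i) r x D \<and> D \<ge> 0"
  shows "pre_aggregation (BGM f) \<and> r_increasing r (BGM f)"
proof -
  have w1: "\<And>i x. x \<in> unit_cube \<Longrightarrow> 0 \<le> f i x \<and> f i x \<le> 1"
    and w2: "\<And>x. x \<in> unit_cube \<Longrightarrow> (\<Sum>i\<in>UNIV. f i x) \<le> 1"
    and w3: "(\<Sum>i\<in>UNIV. f i (\<chi> j. 1)) = 1"
    using assms(1) unfolding wFWF_def by auto
  have ri: "r_increasing r (BGM f)"
    unfolding r_increasing_def BGM_def
  proof (intro ballI allI impI)
    fix x :: "real ^ 'n" and t :: real
    assume x: "x \<in> unit_cube" and t: "t > 0" and xt: "x + t *\<^sub>R r \<in> unit_cube"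
    show "(\<Sum>i\<in>UNIV. f i x * x $ i) \<le> (\<Sum>i\<in>UNIV. f i (x + t *\<^sub>R r) * (x + t *\<^sub>R r) $ i)"
    proof (rule sum_mono)
      fix i
      have m: "f i x \<le> f i (x + t *\<^sub>R r)"
        using mono_dir[OF x assms(2) xt t] assms(4) by blast
      have "0 \<le> f i x" using w1 x by blast
      moreover have "0 \<le> x $ i" "0 \<le> r $ i" using x assms(2) unfolding unit_cube_def by auto
      ultimately show "f i x * x $ i \<le> f i (x + t *\<^sub>R r) * (x + t *\<^sub>R r) $ i"
        using m t by (simp add: mult_mono)
    qed
  qed
  have rng: "0 \<le> BGM f x \<and> BGM f x \<le> 1" if x: "x \<in> unit_cube" for x
  proof -
    have xi: "0 \<le> x $ i" "x $ i \<le> 1" for i using x unfolding unit_cube_def by auto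
    have "0 \<le> BGM f x" unfolding BGM_def using w1[OF x] xi by (auto intro!: sum_nonneg)
    moreover have "BGM f x \<le> (\<Sum>i\<in>UNIV. f i x)" unfolding BGM_def
      using w1[OF x] xi by (auto intro!: sum_mono simp: mult_left_le)
    ultimately show ?thesis using w2[OF x] by linarith
  qed
  have "BGM f (\<chi> j. 0) = 0" unfolding BGM_def by simp
  moreover have "BGM f (\<chi> j. 1) = 1" unfolding BGM_def using w3 by simp
  ultimately show ?thesis unfolding pre_aggregation_def using rng ri assms(2,3) by blast
qed

end
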